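(* For every integer $N\ge 0$, let $T_{2\times 3}(6,N)$ be the number of tilings of a $6\times N$ rectangle by $N$ tiles of size $2\times 3$. Then, as formal power series, \[ \sum_{N\ge 0} T_{2\times 3}(6,N)\,z^N=\frac{1}{1-z^2-z^3}. \]
   Context: A tiling of an $m\times n$ rectangle (width $m$, length $n$, made of $mn$ unit squares) by $a\times b$ tiles is a partition of the rectangle into non-overlapping axis-parallel $a\times b$ rectangles with integer corner coordinates, each placed in either of its two orientations. Tilings related by reflections or rotations of the rectangle are counted as distinct. The empty tiling counts once for $N=0$. *)

theory Defs
  imports Main "HOL-Computational_Algebra.Formal_Power_Series"
begin

text \<open>The m x n rectangle as a set of unit cells (x,y), 0 <= x < m (width), 0 <= y < n (length).\<close>
definition rect :: "nat \<Rightarrow> nat \<Rightarrow> (nat \<times> nat) set" where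
  "rect m n = {0..<m} \<times> {0..<n}"

definition tile_placements :: "nat \<Rightarrow> nat \<Rightarrow> (nat \<times> nat) set set" where
  "tile_placements a b =
     {R. \<exists>x y. R = {x..<x+a} \<times> {y..<y+b} \<or> R = {x..<x+b} \<times> {y..<y+a}}"

definition tilings :: "nat \<Rightarrow> nat \<Rightarrow> nat \<Rightarrow> nat \<Rightarrow> (nat \<times> nat) set set set" where
  "tilings a b m n =
     {T. T \<subseteq> tile_placements a b \<and> \<Union>T = rect m n \<and> pairwise disjnt T}"

definition num_tilings :: "nat \<Rightarrow> nat \<Rightarrow> nat \<Rightarrow> nat \<Rightarrow> nat" where
  "num_tilings a b m n = card (tilings a b m n)"

end

theory Submission
  imports Defs
begin

unbundle fps_syntax


definition sh :: "nat \<Rightarrow> (nat\<times>nat) set \<Rightarrow> (nat\<times>nat) set" where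
  "sh k R = (\<lambda>p. (fst p, snd p + k)) ` R"

lemma inj_pt: "inj (\<lambda>p::nat\<times>nat. (fst p, snd p + k))"
  by (rule injI) (simp add: prod_eq_iff)

lemma inj_sh: "inj (sh k)"
  unfolding sh_def by (rule injI) (simp add: inj_image_eq_iff[OF inj_pt])

lemma mem_sh: "(a,b) \<in> sh k R \<longleftrightarrow> k \<le> b \<and> (a, b-k) \<in> R"
proof
  assume "(a,b) \<in> sh k R"
  then obtain p where "p \<in> R" "(a,b) = (fst p, snd p + k)" unfolding sh_def by blast
  moreover hence "p = (a, b-k)" by (cases p) simp
  ultimately show "k \<le> b \<and> (a, b-k) \<in> R" by auto
next
  assume "k \<le> b \<and> (a, b-k) \<in> R"
  thus "(a,b) \<in> sh k R" unfolding sh_def by (intro image_eqI[where x="(a,b-k)"]) simp_all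
qed

lemma sh_prod: "sh k (A \<times> {y..<y+h}) = A \<times> {y+k..<y+k+h}"
proof (rule set_eqI)
  fix p :: "nat\<times>nat"
  obtain a b where p: "p = (a,b)" by (cases p)
  show "p \<in> sh k (A \<times> {y..<y+h}) \<longleftrightarrow> p \<in> A \<times> {y+k..<y+k+h}"
    unfolding p mem_sh by auto
qed

lemma tile_cases:
  assumes "R \<in> tile_placements 2 3"
  obtains x y w h where "R = {x..<x+w} \<times> {y..<y+h}" "(w=2 \<and> h=3) \<or> (w=3 \<and> h=2)"
  proof -
  from assms obtain x y where "R = {x..<x+2} \<times> {y..<y+3} \<or> R = {x..<x+3} \<times> {y..<y+2}"
    unfolding tile_placements_def by blast
  thus ?thesis using that by blast
qed

lemma tile_ne: assumes "R \<in> tile_placements 2 3" shows "R \<noteq> {}"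
proof -
  obtain x y w h where e: "R = {x..<x+w} \<times> {y..<y+h}" and wh: "(w=2 \<and> h=3) \<or> (w=3 \<and> h=2)"
    using assms by (rule tile_cases)
  have "(x,y) \<in> R" using e wh by auto
  thus ?thesis by blast
qed

lemma sh_tile: "R \<in> tile_placements 2 3 \<Longrightarrow> sh k R \<in> tile_placements 2 3"
proof (erule tile_cases)
  fix x y w h assume e: "R = {x..<x+w} \<times> {y..<y+h}" and wh: "(w=2 \<and> h=3) \<or> (w=3 \<and> h=2)"
  have "sh k R = {x..<x+w} \<times> {(y+k)..<(y+k)+h}" using e by (simp add: sh_prod)
  thus ?thesis using wh unfolding tile_placements_def by blast
qed

lemma unsh_tile:
  assumes "sh k R \<in> tile_placements 2 3"
  shows "R \<in> tile_placements 2 3"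
proof -
  obtain x y w h where e: "sh k R = {x..<x+w} \<times> {y..<y+h}" and wh: "(w=2 \<and> h=3) \<or> (w=3 \<and> h=2)"
    using assms by (rule tile_cases)
  have "(x,y) \<in> sh k R" using e wh by auto
  hence "k \<le> y" by (simp add: mem_sh)
  hence "sh k R = sh k ({x..<x+w} \<times> {y-k..<y-k+h})" using e by (simp only: sh_prod) simp
  hence "R = {x..<x+w} \<times> {y-k..<y-k+h}" using inj_sh by (metis injD)
  thus ?thesis using wh unfolding tile_placements_def by blast
qed

lemma sh_unsh: "R \<subseteq> {p. k \<le> snd p} \<Longrightarrow> sh k ((\<lambda>p. (fst p, snd p - k)) ` R) = R"
proof -
  assume a: "R \<subseteq> {p. k \<le> snd p}"
  have "sh k ((\<lambda>p. (fst p, snd p - k)) ` R) = ((\<lambda>p. (fst p, snd p + k)) \<circ> (\<lambda>p. (fst p, snd p - k))) ` R"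
    unfolding sh_def image_comp ..
  also have "\<dots> = id ` R" using a by (intro image_cong) auto
  finally show ?thesis by simp
qed

lemma tilings_fin: "finite (tilings a b m n)"
proof -
  have "tilings a b m n \<subseteq> Pow (Pow (rect m n))" unfolding tilings_def by auto
  moreover have "finite (rect m n)" unfolding rect_def by auto
  ultimately show ?thesis by (meson finite_Pow_iff finite_subset)
qed


lemma sh_disjnt: "disjnt (sh k R1) (sh k R2) \<longleftrightarrow> disjnt R1 R2"
  unfolding disjnt_def sh_def image_Int[OF inj_pt, symmetric] by simp

lemma sh_ge: "p \<in> sh k R \<Longrightarrow> k \<le> snd p"
  by (cases p) (simp add: mem_sh)

lemma sh_Union: "\<Union>(sh k ` S) = sh k (\<Union>S)"
  unfolding sh_def by (simp add: image_Union)

lemma sh_rect: "sh k (rect m n) = {0..<m} \<times> {k..<k+n}"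
  using sh_prod[of k "{0..<m}" 0 n] unfolding rect_def by simp

lemma block:
  fixes B :: "(nat\<times>nat) set set"
  assumes Bt: "B \<subseteq> tile_placements 2 3" and Bd: "pairwise disjnt B"
    and BU: "\<Union>B = rect m k" and kN: "k \<le> N"
  shows "card {T \<in> tilings 2 3 m N. B \<subseteq> T} = card (tilings 2 3 m (N-k))"
proof -
  define f where "f = (\<lambda>S. B \<union> sh k ` S)"
  have F1: "snd p < k" if "R \<in> B" "p \<in> R" for R p
  proof -
    have "p \<in> rect m k" using that BU by blast
    thus ?thesis by (cases p) (simp add: rect_def)
  qed
  have F3: "B \<inter> sh k ` S = {}" for S
  proof (rule ccontr)
    assume "B \<inter> sh k ` S \<noteq> {}"
    then obtain R0 where R0: "sh k R0 \<in> B" by blast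
    hence "sh k R0 \<in> tile_placements 2 3" using Bt by (rule subsetD[rotated])
    hence "sh k R0 \<noteq> {}" by (rule tile_ne)
    then obtain p where p: "p \<in> sh k R0" by (rule ex_in_conv[THEN iffD2, THEN exE])
    have "snd p < k" by (rule F1[OF R0 p])
    moreover have "k \<le> snd p" by (rule sh_ge[OF p])
    ultimately show False by simp
  qed
  have inj: "inj_on f (tilings 2 3 m (N-k))"
  proof (rule inj_onI)
    fix S1 S2 assume "f S1 = f S2"
    have e1: "sh k ` S1 = (B \<union> sh k ` S1) - B" using F3[of S1] by blast
    have e2: "sh k ` S2 = (B \<union> sh k ` S2) - B" using F3[of S2] by blast
    have X: "(B \<union> sh k ` S1) - B = (B \<union> sh k ` S2) - B" using \<open>f S1 = f S2\<close> unfolding f_def by simp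
    have "sh k ` S1 = sh k ` S2" using trans[OF trans[OF e1 X] e2[symmetric]] .
    thus "S1 = S2" by (rule inj_image_eq_iff[OF inj_sh, THEN iffD1])
  qed
  have img1: "f S \<in> {T \<in> tilings 2 3 m N. B \<subseteq> T}" if S: "S \<in> tilings 2 3 m (N-k)" for S
  proof -
    have St: "S \<subseteq> tile_placements 2 3" and SU: "\<Union>S = rect m (N-k)" and Sd: "pairwise disjnt S"
      using S unfolding tilings_def mem_Collect_eq by blast+
    have "f S \<subseteq> tile_placements 2 3" unfolding f_def using Bt St sh_tile by blast
    moreover have "\<Union>(f S) = rect m N"
    proof -
      have "\<Union>(f S) = rect m k \<union> {0..<m} \<times> {k..<k+(N-k)}"
        unfolding f_def Union_Un_distrib BU sh_Union SU sh_rect ..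
      also have "\<dots> = rect m N" unfolding rect_def using kN by auto
      finally show ?thesis .
    qed
    moreover have "pairwise disjnt (f S)"
    proof (unfold pairwise_def, intro ballI impI)
      fix R1 R2 assume R1: "R1 \<in> f S" and R2: "R2 \<in> f S" and ne: "R1 \<noteq> R2"
      have cross: "disjnt R R'" if c1: "R \<in> B" and c2: "R' \<in> sh k ` S" for R R'
      proof -
        obtain Q where "R' = sh k Q" using c2 by blast
        hence "\<And>p. p \<in> R' \<Longrightarrow> k \<le> snd p" using sh_ge by blast
        moreover have "\<And>p. p \<in> R \<Longrightarrow> snd p < k" using F1 c1 by blast
        ultimately show ?thesis unfolding disjnt_def using leD by blast
      qed
      show "disjnt R1 R2"
      proof (cases "R1 \<in> B")
        case True
        show ?thesis
        proof (cases "R2 \<in> B")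
          case True thus ?thesis using \<open>R1 \<in> B\<close> ne Bd unfolding pairwise_def by blast
        next
          case False thus ?thesis using R2 True cross unfolding f_def by blast
        qed
      next
        case False
        then obtain Q1 where Q1: "Q1 \<in> S" "R1 = sh k Q1" using R1 unfolding f_def by blast
        show ?thesis
        proof (cases "R2 \<in> B")
          case True thus ?thesis using cross[of R2 R1] Q1 disjnt_sym by blast
        next
          case False
          then obtain Q2 where Q2: "Q2 \<in> S" "R2 = sh k Q2" using R2 unfolding f_def by blast
          have "Q1 \<noteq> Q2" using ne Q1 Q2 by blast
          hence "disjnt Q1 Q2" using Sd Q1 Q2 unfolding pairwise_def by blast
          thus ?thesis using Q1 Q2 sh_disjnt by simp
        qed
      qed
    qed
    ultimately have "f S \<in> tilings 2 3 m N" unfolding tilings_def mem_Collect_eq by blast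
    moreover have "B \<subseteq> f S" unfolding f_def by blast
    ultimately show ?thesis by blast
  qed
  have img2: "T \<in> f ` tilings 2 3 m (N-k)" if T: "T \<in> tilings 2 3 m N" "B \<subseteq> T" for T
  proof -
    have Tt: "T \<subseteq> tile_placements 2 3" and TU: "\<Union>T = rect m N" and Td: "pairwise disjnt T"
      using T unfolding tilings_def mem_Collect_eq by blast+
    have up: "R \<subseteq> {p. k \<le> snd p}" if R: "R \<in> T - B" for R
    proof
      fix p assume p: "p \<in> R"
      show "p \<in> {p. k \<le> snd p}"
      proof (rule ccontr)
        assume "p \<notin> {p. k \<le> snd p}"
        hence "snd p < k" by simp
        moreover have "p \<in> rect m N" using TU p R by blast
        ultimately have "p \<in> \<Union>B" unfolding BU rect_def by auto
        then obtain R' where "R' \<in> B" "p \<in> R'" by blast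
        moreover hence "R' \<noteq> R" using R by blast
        ultimately have "disjnt R R'" using Td R T(2) unfolding pairwise_def by blast
        thus False using p \<open>p \<in> R'\<close> unfolding disjnt_def by blast
      qed
    qed
    define g where "g = (\<lambda>R. (\<lambda>p. (fst p, snd p - k)) ` (R::(nat\<times>nat) set))"
    have shg: "sh k (g R) = R" if "R \<in> T - B" for R using sh_unsh[OF up[OF that]] unfolding g_def .
    define S where "S = {R0. sh k R0 \<in> T - B}"
    have TB: "T - B = sh k ` S"
    proof
      show "T - B \<subseteq> sh k ` S"
      proof
        fix R assume R: "R \<in> T - B"
        hence "g R \<in> S" unfolding S_def using shg by simp
        thus "R \<in> sh k ` S" using shg[OF R] by (metis image_eqI)
      qed
      show "sh k ` S \<subseteq> T - B" unfolding S_def by blast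
    qed
    hence Teq: "T = f S" unfolding f_def using T(2) by blast
    have "S \<subseteq> tile_placements 2 3" unfolding S_def using Tt unsh_tile by blast
    moreover have "\<Union>S = rect m (N-k)"
    proof
      show "\<Union>S \<subseteq> rect m (N-k)"
      proof
        fix p assume "p \<in> \<Union>S"
        then obtain R0 where R0: "R0 \<in> S" "p \<in> R0" by blast
        obtain a b where p: "p = (a,b)" by (cases p)
        have "(a, b+k) \<in> sh k R0" using R0 p by (simp add: mem_sh)
        hence "(a, b+k) \<in> rect m N" using R0 TU unfolding S_def by blast
        thus "p \<in> rect m (N-k)" using p unfolding rect_def by auto
      qed
      show "rect m (N-k) \<subseteq> \<Union>S"
      proof
        fix p assume pr: "p \<in> rect m (N-k)"
        obtain a b where p: "p = (a,b)" by (cases p)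
        have "(a, b+k) \<in> rect m N" using pr p unfolding rect_def by auto
        then obtain R where R: "R \<in> T" "(a,b+k) \<in> R" using TU by blast
        have "R \<notin> B"
        proof
          assume "R \<in> B"
          from F1[OF this R(2)] show False by simp
        qed
        hence RT: "R \<in> T - B" using R by blast
        hence RS: "g R \<in> S" unfolding S_def using shg by simp
        have "(a,b+k) \<in> sh k (g R)" using R shg[OF RT] by simp
        hence "p \<in> g R" using p by (simp add: mem_sh)
        thus "p \<in> \<Union>S" using RS by blast
      qed
    qed
    moreover have "pairwise disjnt S"
    proof (unfold pairwise_def, intro ballI impI)
      fix Q1 Q2 assume "Q1 \<in> S" "Q2 \<in> S" "Q1 \<noteq> Q2"
      moreover hence "sh k Q1 \<noteq> sh k Q2" using inj_sh by (metis injD)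
      ultimately have "disjnt (sh k Q1) (sh k Q2)" using Td unfolding S_def pairwise_def by blast
      thus "disjnt Q1 Q2" using sh_disjnt by simp
    qed
    ultimately have "S \<in> tilings 2 3 m (N-k)" unfolding tilings_def by blast
    thus ?thesis using Teq by blast
  qed
  have "bij_betw f (tilings 2 3 m (N-k)) {T \<in> tilings 2 3 m N. B \<subseteq> T}"
  proof -
    have "f ` tilings 2 3 m (N-k) \<subseteq> {T \<in> tilings 2 3 m N. B \<subseteq> T}" using img1 by (rule image_subsetI)
    moreover have "{T \<in> tilings 2 3 m N. B \<subseteq> T} \<subseteq> f ` tilings 2 3 m (N-k)" using img2 by blast
    ultimately show ?thesis unfolding bij_betw_def using inj by (rule conjI[rotated, OF subset_antisym])
  qed
  from bij_betw_same_card[OF this] show ?thesis by (rule sym)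
qed

lemma block_big:
  fixes B :: "(nat\<times>nat) set set"
  assumes BU: "\<Union>B = rect m k" and kN: "N < k" and m: "0 < m"
  shows "{T \<in> tilings 2 3 m N. B \<subseteq> T} = {}"
proof (rule ccontr)
  assume "{T \<in> tilings 2 3 m N. B \<subseteq> T} \<noteq> {}"
  then obtain T where "T \<in> tilings 2 3 m N" "B \<subseteq> T" by blast
  hence "rect m k \<subseteq> rect m N" unfolding tilings_def using BU by blast
  moreover have "(0, N) \<in> rect m k" using kN m unfolding rect_def by auto
  moreover have "(0, N) \<notin> rect m N" unfolding rect_def by auto
  ultimately show False by blast
qed

lemma cover:
  assumes T: "T \<in> tilings 2 3 6 N" and a: "a < 6" and N: "0 < N"
  obtains x w h where "{x..<x+w} \<times> {0..<h} \<in> T" "x \<le> a" "a < x+w" "x+w \<le> 6"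
    "(w=2 \<and> h=3) \<or> (w=3 \<and> h=2)"
proof -
  have Tt: "T \<subseteq> tile_placements 2 3" and TU: "\<Union>T = rect 6 N"
    using T unfolding tilings_def mem_Collect_eq by blast+
  have "(a,0) \<in> rect 6 N" using a N unfolding rect_def by simp
  then obtain R where R: "R \<in> T" "(a,0) \<in> R" using TU by blast
  hence "R \<in> tile_placements 2 3" using Tt by blast
  then obtain x y w h where e: "R = {x..<x+w} \<times> {y..<y+h}" and wh: "(w=2 \<and> h=3) \<or> (w=3 \<and> h=2)"
    by (rule tile_cases)
  have y: "y = 0" and xa: "x \<le> a" "a < x+w" using R(2) e by auto
  have "(x+w-1, y) \<in> R" using e wh by auto
  hence "(x+w-1, y) \<in> rect 6 N" using R(1) TU by blast
  hence "x+w \<le> 6" using wh unfolding rect_def by auto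
  thus ?thesis using that[of x w h] R(1) e y xa wh by simp
qed

lemma uniq:
  assumes T: "T \<in> tilings 2 3 6 N" and "R1 \<in> T" "R2 \<in> T" "p \<in> R1" "p \<in> R2"
  shows "R1 = R2"
proof (rule ccontr)
  assume "R1 \<noteq> R2"
  moreover have "pairwise disjnt T" using T unfolding tilings_def by blast
  ultimately have "disjnt R1 R2" using assms unfolding pairwise_def by blast
  thus False using assms unfolding disjnt_def by blast
qed

definition B1 :: "(nat\<times>nat) set set" where "B1 = {{0..<3} \<times> {0..<2}, {3..<6} \<times> {0..<2}}"
definition B2 :: "(nat\<times>nat) set set" where "B2 = {{0..<2} \<times> {0..<3}, {2..<4} \<times> {0..<3}, {4..<6} \<times> {0..<3}}"

lemma key:
  assumes T: "T \<in> tilings 2 3 6 N" and N: "0 < N"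
  shows "B1 \<subseteq> T \<or> B2 \<subseteq> T"
proof -
  obtain x0 w0 h0 where R0: "{x0..<x0+w0} \<times> {0..<h0} \<in> T" "x0 \<le> 0" "0 < x0+w0" "x0+w0 \<le> 6"
    "(w0=2 \<and> h0=3) \<or> (w0=3 \<and> h0=2)" using cover[OF T _ N, of 0] by auto
  have x0: "x0 = 0" using R0 by simp
  show ?thesis
  proof (cases "w0 = 3")
    case True
    hence A0: "{0..<3} \<times> {0..<2} \<in> T" using R0 x0 by auto
    obtain x1 w1 h1 where R1: "{x1..<x1+w1} \<times> {0..<h1} \<in> T" "x1 \<le> 3" "3 < x1+w1" "x1+w1 \<le> 6"
      "(w1=2 \<and> h1=3) \<or> (w1=3 \<and> h1=2)" using cover[OF T _ N, of 3] by auto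
    have x1: "x1 = 3"
    proof (rule ccontr)
      assume "x1 \<noteq> 3"
      hence "(x1, 0) \<in> {0..<3} \<times> {0..<(2::nat)}" "(x1,0) \<in> {x1..<x1+w1} \<times> {0..<h1}" using R1 by auto
      hence "{x1..<x1+w1} \<times> {0..<h1} = {0..<3} \<times> {0..<2}" using uniq[OF T R1(1) A0] by blast
      moreover have "(3,0) \<in> {x1..<x1+w1} \<times> {0..<h1}" using R1 by auto
      ultimately show False by simp
    qed
    show ?thesis
    proof (cases "w1 = 3")
      case True
      hence "{3..<6} \<times> {0..<2} \<in> T" using R1 x1 by auto
      thus ?thesis using A0 unfolding B1_def by blast
    next
      case False
      hence w1: "w1 = 2" "h1 = 3" using R1 by auto
      obtain x2 w2 h2 where R2: "{x2..<x2+w2} \<times> {0..<h2} \<in> T" "x2 \<le> 5" "5 < x2+w2" "x2+w2 \<le> 6"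
        "(w2=2 \<and> h2=3) \<or> (w2=3 \<and> h2=2)" using cover[OF T _ N, of 5] by auto
      have "(x2, 0) \<in> {x1..<x1+w1} \<times> {0..<h1}" "(x2,0) \<in> {x2..<x2+w2} \<times> {0..<h2}"
        using R2 x1 w1 by auto
      hence "{x2..<x2+w2} \<times> {0..<h2} = {x1..<x1+w1} \<times> {0..<h1}" using uniq[OF T R1(1) R2(1)] by blast
      moreover have "(5,0) \<in> {x2..<x2+w2} \<times> {0..<h2}" using R2 by auto
      ultimately show ?thesis using x1 w1 by simp
    qed
  next
    case False
    hence w0: "w0 = 2" "h0 = 3" using R0 by auto
    hence "{x0..<x0+w0} \<times> {0..<h0} = {0..<2} \<times> {0..<3}" using x0 by (simp add: numeral_2_eq_2)
    hence C0: "{0..<2} \<times> {0..<3} \<in> T" using R0(1) by simp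
    obtain x1 w1 h1 where R1: "{x1..<x1+w1} \<times> {0..<h1} \<in> T" "x1 \<le> 2" "2 < x1+w1" "x1+w1 \<le> 6"
      "(w1=2 \<and> h1=3) \<or> (w1=3 \<and> h1=2)" using cover[OF T _ N, of 2] by auto
    have x1: "x1 = 2"
    proof (rule ccontr)
      assume "x1 \<noteq> 2"
      hence "(x1, 0) \<in> {0..<2} \<times> {0..<(3::nat)}" "(x1,0) \<in> {x1..<x1+w1} \<times> {0..<h1}" using R1 by auto
      hence "{x1..<x1+w1} \<times> {0..<h1} = {0..<2} \<times> {0..<3}" using uniq[OF T R1(1) C0] by blast
      moreover have "(2,0) \<in> {x1..<x1+w1} \<times> {0..<h1}" using R1 by auto
      ultimately show False by simp
    qed
    show ?thesis
    proof (cases "w1 = 3")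
      case True
      hence w1: "h1 = 2" using R1 by auto
      obtain x2 w2 h2 where R2: "{x2..<x2+w2} \<times> {0..<h2} \<in> T" "x2 \<le> 5" "5 < x2+w2" "x2+w2 \<le> 6"
        "(w2=2 \<and> h2=3) \<or> (w2=3 \<and> h2=2)" using cover[OF T _ N, of 5] by auto
      have "(x2, 0) \<in> {x1..<x1+w1} \<times> {0..<h1}" "(x2,0) \<in> {x2..<x2+w2} \<times> {0..<h2}"
        using R2 x1 w1 True by auto
      hence "{x2..<x2+w2} \<times> {0..<h2} = {x1..<x1+w1} \<times> {0..<h1}" using uniq[OF T R1(1) R2(1)] by blast
      moreover have "(5,0) \<in> {x2..<x2+w2} \<times> {0..<h2}" using R2 by auto
      ultimately show ?thesis using x1 w1 True by simp
    next
      case False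
      hence w1: "w1 = 2" "h1 = 3" using R1 by auto
      hence C1: "{2..<4} \<times> {0..<3} \<in> T" using R1 x1 by auto
      obtain x2 w2 h2 where R2: "{x2..<x2+w2} \<times> {0..<h2} \<in> T" "x2 \<le> 4" "4 < x2+w2" "x2+w2 \<le> 6"
        "(w2=2 \<and> h2=3) \<or> (w2=3 \<and> h2=2)" using cover[OF T _ N, of 4] by auto
      have x2: "x2 = 4"
      proof (rule ccontr)
        assume "x2 \<noteq> 4"
        hence "(x2, 0) \<in> {2..<4} \<times> {0..<(3::nat)}" "(x2,0) \<in> {x2..<x2+w2} \<times> {0..<h2}" using R2 by auto
        hence "{x2..<x2+w2} \<times> {0..<h2} = {2..<4} \<times> {0..<3}" using uniq[OF T R2(1) C1] by blast
        moreover have "(4,0) \<in> {x2..<x2+w2} \<times> {0..<h2}" using R2 by auto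
        ultimately show False by simp
      qed
      hence "{4..<6} \<times> {0..<3} \<in> T" using R2 by auto
      thus ?thesis using C0 C1 unfolding B2_def by blast
    qed
  qed
qed


lemma tp1: "{x..<x+3} \<times> {y..<y+2} \<in> tile_placements 2 3"
  unfolding tile_placements_def by blast
lemma tp2: "{x..<x+2} \<times> {y..<y+3} \<in> tile_placements 2 3"
  unfolding tile_placements_def by blast

lemma B1_props: "B1 \<subseteq> tile_placements 2 3" "pairwise disjnt B1" "\<Union>B1 = rect 6 2"
proof -
  have "{0..<3} \<times> {0..<2} \<in> tile_placements 2 3" using tp1[of 0 0] by (simp add: numeral_2_eq_2)
  moreover have "{3..<6} \<times> {0..<2} \<in> tile_placements 2 3" using tp1[of 3 0] by (simp add: numeral_2_eq_2)
  ultimately show "B1 \<subseteq> tile_placements 2 3" unfolding B1_def by blast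
  show "pairwise disjnt B1" unfolding B1_def pairwise_insert disjnt_def by auto
  show "\<Union>B1 = rect 6 2" unfolding B1_def rect_def
  proof (rule set_eqI)
    fix p :: "nat \<times> nat" obtain a b where p: "p = (a,b)" by (cases p)
    show "p \<in> \<Union>{{0..<3} \<times> {0..<2}, {3..<6} \<times> {0..<2}} \<longleftrightarrow> p \<in> {0..<6} \<times> {0..<2}"
      unfolding p by auto
  qed
qed

lemma B2_props: "B2 \<subseteq> tile_placements 2 3" "pairwise disjnt B2" "\<Union>B2 = rect 6 3"
proof -
  have "{0..<2} \<times> {0..<3} \<in> tile_placements 2 3" using tp2[of 0 0] by (simp add: numeral_2_eq_2)
  moreover have "{2..<4} \<times> {0..<3} \<in> tile_placements 2 3" using tp2[of 2 0] by simp
  moreover have "{4..<6} \<times> {0..<3} \<in> tile_placements 2 3" using tp2[of 4 0] by simp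
  ultimately show "B2 \<subseteq> tile_placements 2 3" unfolding B2_def by blast
  show "pairwise disjnt B2" unfolding B2_def pairwise_insert disjnt_def by auto
  show "\<Union>B2 = rect 6 3" unfolding B2_def rect_def
  proof (rule set_eqI)
    fix p :: "nat \<times> nat" obtain a b where p: "p = (a,b)" by (cases p)
    show "p \<in> \<Union>{{0..<2} \<times> {0..<3}, {2..<4} \<times> {0..<3}, {4..<6} \<times> {0..<3}} \<longleftrightarrow> p \<in> {0..<6} \<times> {0..<3}"
      unfolding p by auto
  qed
qed

lemma B12_disj: "{T \<in> tilings 2 3 6 N. B1 \<subseteq> T} \<inter> {T \<in> tilings 2 3 6 N. B2 \<subseteq> T} = {}"
proof (rule ccontr)
  assume "{T \<in> tilings 2 3 6 N. B1 \<subseteq> T} \<inter> {T \<in> tilings 2 3 6 N. B2 \<subseteq> T} \<noteq> {}"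
  then obtain T where T: "T \<in> tilings 2 3 6 N" "B1 \<subseteq> T" "B2 \<subseteq> T" by blast
  have a: "{0..<3} \<times> {0..<2} \<in> T" using T(2) unfolding B1_def by blast
  have b: "{0..<2} \<times> {0..<3} \<in> T" using T(3) unfolding B2_def by blast
  have "{0..<3} \<times> {0..<2} = ({0..<2} \<times> {0..<3} :: (nat\<times>nat) set)"
    by (rule uniq[OF T(1) a b, of "(0,0)"]) auto
  moreover have "(2,0) \<in> ({0..<3} \<times> {0..<2} :: (nat\<times>nat) set)" by simp
  ultimately show False by simp
qed

lemma t0: "num_tilings 2 3 6 0 = 1"
proof -
  have "tilings 2 3 6 0 = {{}}"
  proof
    show "{{}} \<subseteq> tilings 2 3 6 0" unfolding tilings_def rect_def by simp
    show "tilings 2 3 6 0 \<subseteq> {{}}"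
    proof
      fix T assume T: "T \<in> tilings 2 3 6 0"
      hence "\<Union>T = {}" "T \<subseteq> tile_placements 2 3" unfolding tilings_def rect_def by auto
      hence "T = {}" using tile_ne by blast
      thus "T \<in> {{}}" by simp
    qed
  qed
  thus ?thesis unfolding num_tilings_def by simp
qed

lemma cnt:
  assumes BU: "\<Union>B = rect 6 k" and Bt: "B \<subseteq> tile_placements 2 3" and Bd: "pairwise disjnt B"
  shows "card {T \<in> tilings 2 3 6 N. B \<subseteq> T} = (if k \<le> N then num_tilings 2 3 6 (N-k) else 0)"
proof (cases "k \<le> N")
  case True thus ?thesis using block[OF Bt Bd BU True] unfolding num_tilings_def by simp
next
  case False
  have "{T \<in> tilings 2 3 6 N. B \<subseteq> T} = {}" by (rule block_big[OF BU]) (use False in auto)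
  hence "card {T \<in> tilings 2 3 6 N. B \<subseteq> T} = 0" by (simp only: card.empty)
  thus ?thesis using False by simp
qed

lemma trec:
  assumes N: "0 < N"
  shows "num_tilings 2 3 6 N = (if 2 \<le> N then num_tilings 2 3 6 (N-2) else 0)
                              + (if 3 \<le> N then num_tilings 2 3 6 (N-3) else 0)"
proof -
  have "tilings 2 3 6 N = {T \<in> tilings 2 3 6 N. B1 \<subseteq> T} \<union> {T \<in> tilings 2 3 6 N. B2 \<subseteq> T}"
    using key[OF _ N] by blast
  hence "num_tilings 2 3 6 N = card {T \<in> tilings 2 3 6 N. B1 \<subseteq> T} + card {T \<in> tilings 2 3 6 N. B2 \<subseteq> T}"
    unfolding num_tilings_def using B12_disj tilings_fin
    by (metis (no_types, lifting) card_Un_disjoint finite_Un)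
  thus ?thesis using cnt[OF B1_props(3,1,2)] cnt[OF B2_props(3,1,2)] by simp
qed

theorem mainTheorem9:
  shows "Abs_fps (\<lambda>N. of_nat (num_tilings 2 3 6 N)) =
           inverse (1 - fps_X ^ 2 - fps_X ^ 3 :: rat fps)"
proof -
  define f where "f = Abs_fps (\<lambda>N. of_nat (num_tilings 2 3 6 N) :: rat)"
  have "(1 - fps_X ^ 2 - fps_X ^ 3) * f = 1"
  proof (rule fps_ext)
    fix n
    have "((1 - fps_X ^ 2 - fps_X ^ 3) * f) $ n = f $ n - (fps_X ^ 2 * f) $ n - (fps_X ^ 3 * f) $ n"
      by (simp add: algebra_simps)
    also have "\<dots> = 1 $ n"
    proof (cases "n = 0")
      case True thus ?thesis by (simp add: fps_X_power_mult_nth f_def t0)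
    next
      case False
      hence "0 < n" by simp
      from trec[OF this] show ?thesis using False
        by (simp add: fps_X_power_mult_nth f_def not_less)
    qed
    finally show "((1 - fps_X ^ 2 - fps_X ^ 3) * f) $ n = 1 $ n" .
  qed
  hence "inverse (1 - fps_X ^ 2 - fps_X ^ 3) = f" by (rule fps_inverse_unique)
  thus ?thesis unfolding f_def by simp
qed

end
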